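(* Let $\delta\in(0,\tfrac14]$. Then for all sufficiently large $n$ (the threshold may depend on $\delta$) the following holds for every conjugacy class $C$ of $S_n$ with $f(C)\le\delta n$: (1) For every integer $k$ with $\frac12 n<k\le\frac58 n$, \begin{equation*} \sum_{\substack{C_1\in [S_k],\ C_2\in[S_{n-k}]\\C=C_1C_2}}|C_1||C_2|\leq\exp\left(-\frac{3}{50}n\right)|C|. \end{equation*} (2) \begin{equation*} \sum_{\substack{C_1\in [S_{n-1}],\ C_2\in[S_1]\\C=C_1C_2}}|C_1|\leq\delta |C|\qquad\text{and}\qquad\sum_{\substack{C_1\in [S_{n-2}],\ C_2\in [S_2]\\C=C_1C_2}}|C_1|\leq 2\delta^2|C|. \end{equation*}
   Context: $[S_m]$ denotes the set of conjugacy classes of $S_m$. For a conjugacy class $C$ of $S_n$, $f(C)$ denotes the number of fixed points of a permutation in $C$. For $C\in[S_n]$, $C_1\in[S_k]$, $C_2\in[S_{n-k}]$, let $m_l,s_l,t_l$ be the number of $l$-cycles of permutations in $C,C_1,C_2$ respectively; one writes $C=C_1C_2$ iff $m_l=s_l+t_l$ for all $l=1,\dots,n$. *)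

theory Defs
  imports Complex_Main "HOL-Combinatorics.Permutations" "HOL-Combinatorics.Orbits"
begin

definition conj_class :: "nat \<Rightarrow> (nat \<Rightarrow> nat) \<Rightarrow> (nat \<Rightarrow> nat) set" where
  "conj_class n p = (\<lambda>r. r \<circ> p \<circ> inv r) ` {r. r permutes {..<n}}"

definition conj_classes :: "nat \<Rightarrow> (nat \<Rightarrow> nat) set set" where
  "conj_classes n = conj_class n ` {p. p permutes {..<n}}"

text \<open>Number of l-cycles of a permutation p of {..<n} (cycles = orbits, fixed points count as 1-cycles).\<close>
definition num_cycles :: "nat \<Rightarrow> (nat \<Rightarrow> nat) \<Rightarrow> nat \<Rightarrow> nat" where
  "num_cycles n p l = card {Orb. \<exists>x<n. Orb = orbit p x \<and> card Orb = l}"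

definition class_cycles :: "nat \<Rightarrow> (nat \<Rightarrow> nat) set \<Rightarrow> nat \<Rightarrow> nat" where
  "class_cycles n C l = num_cycles n (SOME p. p \<in> C) l"

definition fixpts :: "nat \<Rightarrow> (nat \<Rightarrow> nat) set \<Rightarrow> nat" where
  "fixpts n C = class_cycles n C 1"

text \<open>C = C1 C2 for C in [S_n], C1 in [S_k], C2 in [S_(n-k)].\<close>
definition class_prod_eq :: "nat \<Rightarrow> nat \<Rightarrow> (nat \<Rightarrow> nat) set \<Rightarrow> (nat \<Rightarrow> nat) set \<Rightarrow> (nat \<Rightarrow> nat) set \<Rightarrow> bool" where
  "class_prod_eq n k C C1 C2 \<longleftrightarrow>
     (\<forall>l\<in>{1..n}. class_cycles n C l = class_cycles k C1 l + class_cycles (n - k) C2 l)"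

end

theory Submission
  imports Defs "HOL-Real_Asymp.Real_Asymp"
begin

lemma orbit_conj_aux:
  assumes "p ` A \<subseteq> A" "\<forall>x\<in>A. r (p x) = q (r x)" "x \<in> A"
  shows "(q ^^ m) (r x) = r ((p ^^ m) x) \<and> (p ^^ m) x \<in> A"
  using assms by (induction m) auto

lemma orbit_conj:
  assumes "p ` A \<subseteq> A" "\<forall>x\<in>A. r (p x) = q (r x)" "x \<in> A"
  shows "orbit q (r x) = r ` orbit p x"
  using orbit_conj_aux[OF assms] unfolding orbit_altdef by auto

lemma orbit_subset_inv:
  assumes "p ` A \<subseteq> A" "x \<in> A"
  shows "orbit p x \<subseteq> A"
proof
  fix y assume "y \<in> orbit p x" then show "y \<in> A" by induct (use assms in auto)
qed

definition Orbs :: "('a \<Rightarrow> 'a) \<Rightarrow> 'a set \<Rightarrow> 'a set set" where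
  "Orbs p A = (\<lambda>x. orbit p x) ` A"

definition ncyc :: "('a \<Rightarrow> 'a) \<Rightarrow> 'a set \<Rightarrow> nat \<Rightarrow> nat" where
  "ncyc p A l = card {Y \<in> Orbs p A. card Y = l}"

lemma num_cycles_ncyc: "num_cycles n p l = ncyc p {..<n} l"
  unfolding num_cycles_def ncyc_def Orbs_def
  by (rule arg_cong[where f=card]) auto

lemma ncyc_conj:
  assumes "bij_betw r A B" "p ` A \<subseteq> A" "\<forall>x\<in>A. r (p x) = q (r x)"
  shows "ncyc p A l = ncyc q B l"
proof -
  have B: "B = r ` A" using assms(1) by (simp add: bij_betw_def)
  have inj: "inj_on r A" using assms(1) by (simp add: bij_betw_def)
  have sub: "\<And>Y. Y \<in> Orbs p A \<Longrightarrow> Y \<subseteq> A"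
    unfolding Orbs_def using orbit_subset_inv[OF assms(2)] by auto
  have "Orbs q B = (\<lambda>Y. r ` Y) ` Orbs p A"
    unfolding Orbs_def B image_image using orbit_conj[OF assms(2,3)] by auto
  hence "{Y \<in> Orbs q B. card Y = l} = (\<lambda>Y. r ` Y) ` {Y \<in> Orbs p A. card Y = l}"
    using sub inj by (auto simp: card_image inj_on_subset)
  moreover have "inj_on (\<lambda>Y. r ` Y) {Y \<in> Orbs p A. card Y = l}"
    using sub inj by (intro inj_onI) (metis (no_types, lifting) inj_on_image_eq_iff mem_Collect_eq)
  ultimately show ?thesis unfolding ncyc_def by (simp add: card_image)
qed

lemma orb_enum:
  assumes "a \<in> orbit p a"
  shows "bij_betw (\<lambda>i. (p ^^ i) a) {..<card (orbit p a)} (orbit p a)"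
    "(p ^^ card (orbit p a)) a = a" "card (orbit p a) > 0"
proof -
  let ?m = "funpow_dist1 p a a"
  have e: "orbit p a = (\<lambda>n. (p ^^ n) a) ` {0..<?m}" by (rule orbit_conv_funpow_dist1[OF assms])
  have i: "inj_on (\<lambda>n. (p ^^ n) a) {0..<?m}" by (rule inj_on_funpow_dist1[OF assms])
  have c: "card (orbit p a) = ?m" using e i by (simp add: card_image)
  show "bij_betw (\<lambda>i. (p ^^ i) a) {..<card (orbit p a)} (orbit p a)"
    using e i c by (simp add: bij_betw_def atLeast0LessThan)
  show "(p ^^ card (orbit p a)) a = a" using c funpow_dist1_prop[OF assms] by simp
  show "card (orbit p a) > 0" using c by simp
qed

lemma perm_self_in_orbit:
  assumes "p permutes A" "finite A" shows "x \<in> orbit p x"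
  using assms by (intro permutation_self_in_orbit) (auto simp: permutation_permutes)

lemma orbit_eq_of_in:
  assumes "p permutes A" "finite A" "y \<in> orbit p x" shows "orbit p y = orbit p x"
  using orbit_cyclic_eq3[OF cyclic_on_orbit[OF assms(1,2)] assms(3)] .

lemma finite_Orbs: "finite A \<Longrightarrow> finite (Orbs p A)"
  by (simp add: Orbs_def)

lemma ncyc_remove:
  assumes "p permutes A" "finite A" "a \<in> A"
  shows "ncyc p A m = ncyc (perm_restrict p (A - orbit p a)) (A - orbit p a) m
           + (if m = card (orbit p a) then 1 else 0)"
proof -
  let ?Y = "orbit p a" let ?p = "perm_restrict p (A - ?Y)"
  have pp: "?p permutes (A - ?Y)"
    by (rule perm_restrict_diff_cyclic[OF assms(1) cyclic_on_orbit[OF assms(1,2)]])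
  have img: "?p ` (A - ?Y) \<subseteq> A - ?Y" using pp by (simp add: permutes_image)
  have eqo: "orbit ?p x = orbit p x" if "x \<in> A - ?Y" for x
  proof -
    have "?p \<in> (A - ?Y) \<rightarrow> (A - ?Y)" using img by auto
    from orbit_cong0[OF that this, of p] show ?thesis by (simp add: perm_restrict_simps)
  qed
  have Y1: "orbit p x = ?Y" if "x \<in> ?Y" for x using orbit_eq_of_in[OF assms(1,2) that] .
  have Y2: "orbit p x \<noteq> ?Y" if "x \<in> A - ?Y" for x
    using that perm_self_in_orbit[OF assms(1,2), of x] by auto
  have sub: "?Y \<subseteq> A" by (rule permutes_orbit_subset[OF assms(1,3)])
  have A: "A = ?Y \<union> (A - ?Y)" using sub by blast
  have "orbit p ` ?Y = {?Y}" using Y1 perm_self_in_orbit[OF assms(1,2), of a] by blast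
  moreover have "orbit p ` (A - ?Y) = orbit ?p ` (A - ?Y)" using eqo by (intro image_cong) auto
  moreover have "Orbs p A = orbit p ` ?Y \<union> orbit p ` (A - ?Y)"
    unfolding Orbs_def using A image_Un by metis
  ultimately have "Orbs p A = insert ?Y (Orbs ?p (A - ?Y))"
    unfolding Orbs_def by simp
  moreover have "?Y \<notin> Orbs ?p (A - ?Y)" unfolding Orbs_def using eqo Y2 by auto
  moreover have "finite (Orbs ?p (A - ?Y))" using assms(2) by (simp add: finite_Orbs)
  ultimately show ?thesis
  proof (cases "m = card ?Y")
    case True
    let ?X = "Orbs ?p (A - ?Y)"
    assume h: "Orbs p A = insert ?Y ?X" "?Y \<notin> ?X" "finite ?X"
    have "{Y \<in> Orbs p A. card Y = m} = insert ?Y {Y \<in> ?X. card Y = m}" using h True by auto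
    moreover have "card (insert ?Y {Y \<in> ?X. card Y = m}) = Suc (card {Y \<in> ?X. card Y = m})"
      using h by (intro card_insert_disjoint) auto
    ultimately show ?thesis using True by (simp add: ncyc_def)
  next
    case False
    let ?X = "Orbs ?p (A - ?Y)"
    assume h: "Orbs p A = insert ?Y ?X" "?Y \<notin> ?X" "finite ?X"
    have "{Y \<in> Orbs p A. card Y = m} = {Y \<in> ?X. card Y = m}" using h False by auto
    thus ?thesis using False by (simp add: ncyc_def)
  qed
qed

theorem cyc_conj:
  assumes "finite A" "p permutes A" "finite B" "q permutes B" "\<forall>l. ncyc p A l = ncyc q B l"
  shows "\<exists>r. bij_betw r A B \<and> (\<forall>x\<in>A. r (p x) = q (r x))"
using assms
proof (induction "card A" arbitrary: A B p q rule: less_induct)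
  case less
  show ?case
  proof (cases "A = {}")
    case True
    have "B = {}"
    proof (rule ccontr)
      assume "B \<noteq> {}" then obtain b where b: "b \<in> B" by auto
      let ?l = "card (orbit q b)"
      have "orbit q b \<in> {Y \<in> Orbs q B. card Y = ?l}" using b by (auto simp: Orbs_def)
      moreover have "finite {Y \<in> Orbs q B. card Y = ?l}" using less.prems(3) by (simp add: finite_Orbs)
      ultimately have "ncyc q B ?l > 0" unfolding ncyc_def by (auto simp: card_gt_0_iff)
      moreover have "ncyc p A ?l = 0" using True by (simp add: ncyc_def Orbs_def)
      ultimately show False using less.prems(5) by simp
    qed
    thus ?thesis using True by (intro exI[of _ "\<lambda>_. undefined"]) (simp add: bij_betw_def)
  next
    case False
    then obtain a where a: "a \<in> A" by auto
    let ?Y = "orbit p a" let ?l = "card ?Y"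
    have "?Y \<in> {Y \<in> Orbs p A. card Y = ?l}" using a by (auto simp: Orbs_def)
    moreover have "finite {Y \<in> Orbs p A. card Y = ?l}" using less.prems(1) by (simp add: finite_Orbs)
    ultimately have "ncyc p A ?l > 0" unfolding ncyc_def by (auto simp: card_gt_0_iff)
    hence "ncyc q B ?l > 0" using less.prems(5) by simp
    then obtain b where b: "b \<in> B" "card (orbit q b) = ?l"
      unfolding ncyc_def Orbs_def by (auto simp: card_gt_0_iff)
    let ?Y' = "orbit q b"
    let ?p = "perm_restrict p (A - ?Y)" let ?q = "perm_restrict q (B - ?Y')"
    have pp: "?p permutes (A - ?Y)"
      by (rule perm_restrict_diff_cyclic[OF less.prems(2) cyclic_on_orbit[OF less.prems(2,1)]])
    have qq: "?q permutes (B - ?Y')"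
      by (rule perm_restrict_diff_cyclic[OF less.prems(4) cyclic_on_orbit[OF less.prems(4,3)]])
    have aY: "a \<in> ?Y" by (rule perm_self_in_orbit[OF less.prems(2,1)])
    have bY': "b \<in> ?Y'" by (rule perm_self_in_orbit[OF less.prems(4,3)])
    have subY: "?Y \<subseteq> A" by (rule permutes_orbit_subset[OF less.prems(2) a])
    have subY': "?Y' \<subseteq> B" by (rule permutes_orbit_subset[OF less.prems(4) b(1)])
    have lt: "card (A - ?Y) < card A"
      using aY a less.prems(1) by (intro psubset_card_mono) auto
    have cnt: "\<forall>m. ncyc ?p (A - ?Y) m = ncyc ?q (B - ?Y') m"
    proof
      fix m
      show "ncyc ?p (A - ?Y) m = ncyc ?q (B - ?Y') m"
        using ncyc_remove[OF less.prems(2,1) a, of m] ncyc_remove[OF less.prems(4,3) b(1), of m]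
          less.prems(5) b(2) by simp
    qed
    obtain r' where r': "bij_betw r' (A - ?Y) (B - ?Y')" "\<forall>x\<in>A - ?Y. r' (?p x) = ?q (r' x)"
      using less.hyps[OF lt _ pp _ qq cnt] less.prems(1,3) by auto
    let ?e = "\<lambda>i. (p ^^ i) a" let ?e' = "\<lambda>i. (q ^^ i) b"
    have e: "bij_betw ?e {..<?l} ?Y" "(p ^^ ?l) a = a" "?l > 0" using orb_enum[OF aY] by auto
    have e': "bij_betw ?e' {..<?l} ?Y'" "(q ^^ ?l) b = b" using orb_enum[OF bY'] b(2) by auto
    define r where "r x = (if x \<in> ?Y then ?e' (the_inv_into {..<?l} ?e x) else r' x)" for x
    have rY: "bij_betw r ?Y ?Y'"
    proof -
      have "bij_betw (?e' \<circ> the_inv_into {..<?l} ?e) ?Y ?Y'"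
        by (rule bij_betw_trans[OF bij_betw_the_inv_into[OF e(1)] e'(1)])
      moreover have "(?e' \<circ> the_inv_into {..<?l} ?e) x = r x" if "x \<in> ?Y" for x
        using that unfolding r_def comp_def by simp
      ultimately show ?thesis using bij_betw_cong[of ?Y "?e' \<circ> the_inv_into {..<?l} ?e" r ?Y'] by simp
    qed
    have rR: "bij_betw r (A - ?Y) (B - ?Y')"
    proof -
      have "r' x = r x" if "x \<in> A - ?Y" for x using that unfolding r_def by simp
      thus ?thesis using r'(1) bij_betw_cong[of "A - ?Y" r' r "B - ?Y'"] by simp
    qed
    have "bij_betw r (?Y \<union> (A - ?Y)) (?Y' \<union> (B - ?Y'))" by (rule bij_betw_combine[OF rY rR]) auto
    moreover have "?Y \<union> (A - ?Y) = A" "?Y' \<union> (B - ?Y') = B" using subY subY' by auto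
    ultimately have bij: "bij_betw r A B" by simp
    have conj: "r (p x) = q (r x)" if x: "x \<in> A" for x
    proof (cases "x \<in> ?Y")
      case True
      then obtain i where i: "i < ?l" "x = ?e i" using e(1) by (auto simp: bij_betw_def)
      have ti: "the_inv_into {..<?l} ?e x = i" using i e(1) the_inv_into_f_f[of ?e "{..<?l}" i] by (simp add: bij_betw_def)
      have rx: "r x = ?e' i" using True ti by (simp add: r_def)
      have pxY: "p x \<in> ?Y" using True by (rule orbit.step)
      have pxe: "p x = ?e (Suc i)" using i by simp
      show ?thesis
      proof (cases "Suc i < ?l")
        case True
        hence "the_inv_into {..<?l} ?e (p x) = Suc i" using pxe e(1) the_inv_into_f_f[of ?e "{..<?l}" "Suc i"] by (simp add: bij_betw_def)
        thus ?thesis using pxY rx by (simp add: r_def)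
      next
        case False
        hence si: "Suc i = ?l" using i by simp
        hence "p x = ?e 0" using pxe e(2) by simp
        hence "the_inv_into {..<?l} ?e (p x) = 0" using e(1,3) the_inv_into_f_f[of ?e "{..<?l}" 0] by (simp add: bij_betw_def)
        moreover have "q (r x) = b" using rx si e'(2) by (metis funpow.simps(2) comp_apply)
        ultimately show ?thesis using pxY by (simp add: r_def)
      qed
    next
      case False
      hence xR: "x \<in> A - ?Y" using x by simp
      have px: "?p x = p x" using xR by (simp add: perm_restrict_simps)
      have pxR: "p x \<in> A - ?Y" using permutes_in_image[OF pp, of x] xR px by simp
      have rxR: "r' x \<in> B - ?Y'" using r'(1) xR by (auto simp: bij_betw_def)
      have "r (p x) = r' (p x)" using pxR by (simp add: r_def)
      also have "\<dots> = ?q (r' x)" using r'(2) xR px by metis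
      also have "\<dots> = q (r' x)" using rxR by (simp add: perm_restrict_simps)
      also have "r' x = r x" using False by (simp add: r_def)
      finally show ?thesis .
    qed
    show ?thesis using bij conj by blast
  qed
qed

section \<open>Conjugacy classes\<close>

lemma conj_perm:
  assumes "p permutes A" "r permutes A" shows "r \<circ> p \<circ> inv r permutes A"
  using assms by (intro permutes_compose permutes_inv) auto

lemma ncyc_conj_perm:
  assumes "p permutes {..<n}" "r permutes {..<n}"
  shows "ncyc (r \<circ> p \<circ> inv r) {..<n} l = ncyc p {..<n} l"
proof -
  have "ncyc p {..<n} l = ncyc (r \<circ> p \<circ> inv r) {..<n} l"
  proof (rule ncyc_conj)
    show "bij_betw r {..<n} {..<n}" using assms(2) by (rule permutes_imp_bij)
    show "p ` {..<n} \<subseteq> {..<n}" using assms(1) by (simp add: permutes_image)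
    show "\<forall>x\<in>{..<n}. r (p x) = (r \<circ> p \<circ> inv r) (r x)"
      using permutes_inverses(2)[OF assms(2)] by simp
  qed
  thus ?thesis by simp
qed

lemma ncyc_eq_conj:
  assumes "p permutes {..<n}" "q permutes {..<n}" "\<forall>l. ncyc p {..<n} l = ncyc q {..<n} l"
  shows "q \<in> conj_class n p"
proof -
  obtain r where r: "bij_betw r {..<n} {..<n}" "\<forall>x\<in>{..<n}. r (p x) = q (r x)"
    using cyc_conj[OF _ assms(1) _ assms(2,3)] by auto
  define r' where "r' x = (if x < n then r x else x)" for x
  have "bij_betw r' {..<n} {..<n}"
    using r(1) bij_betw_cong[of "{..<n}" r r' "{..<n}"] by (simp add: r'_def)
  hence rp: "r' permutes {..<n}" by (rule bij_imp_permutes) (simp add: r'_def)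
  have pn: "p x < n" if "x < n" for x using permutes_in_image[OF assms(1)] that by simp
  have qr: "q (r' x) = r' (p x)" for x
  proof (cases "x < n")
    case True thus ?thesis using r(2) pn by (simp add: r'_def)
  next
    case False thus ?thesis using permutes_not_in[OF assms(1)] permutes_not_in[OF assms(2)]
      by (simp add: r'_def)
  qed
  have "q = r' \<circ> p \<circ> inv r'"
  proof
    fix y
    have "q y = q (r' (inv r' y))" using permutes_inverses(1)[OF rp] by simp
    also have "\<dots> = (r' \<circ> p \<circ> inv r') y" using qr by simp
    finally show "q y = (r' \<circ> p \<circ> inv r') y" .
  qed
  thus ?thesis unfolding conj_class_def using rp by blast
qed

lemma conj_class_iff:
  assumes "p permutes {..<n}"
  shows "q \<in> conj_class n p \<longleftrightarrow> q permutes {..<n} \<and> (\<forall>l. ncyc q {..<n} l = ncyc p {..<n} l)"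
proof
  assume "q \<in> conj_class n p"
  then obtain r where r: "r permutes {..<n}" "q = r \<circ> p \<circ> inv r" unfolding conj_class_def image_def by blast
  show "q permutes {..<n} \<and> (\<forall>l. ncyc q {..<n} l = ncyc p {..<n} l)"
    unfolding r(2) using conj_perm[OF assms r(1)] ncyc_conj_perm[OF assms r(1)] by blast
next
  assume "q permutes {..<n} \<and> (\<forall>l. ncyc q {..<n} l = ncyc p {..<n} l)"
  thus "q \<in> conj_class n p" using ncyc_eq_conj[OF assms, of q] by simp
qed

lemma self_conj_class: "p permutes {..<n} \<Longrightarrow> p \<in> conj_class n p"
  using conj_class_iff[of p n p] by simp

lemma conj_class_eq:
  assumes "p permutes {..<n}" "q \<in> conj_class n p"
  shows "conj_class n q = conj_class n p"
proof -
  have q: "q permutes {..<n}" "\<forall>l. ncyc q {..<n} l = ncyc p {..<n} l"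
    using assms(2) conj_class_iff[OF assms(1), of q] by blast+
  show ?thesis
  proof (rule set_eqI)
    fix s show "s \<in> conj_class n q \<longleftrightarrow> s \<in> conj_class n p"
      using conj_class_iff[OF assms(1), of s] conj_class_iff[OF q(1), of s] q(2) by presburger
  qed
qed

lemma class_cycles_eq:
  assumes "p permutes {..<n}" "q \<in> conj_class n p"
  shows "class_cycles n (conj_class n p) l = ncyc q {..<n} l"
proof -
  have "(SOME x. x \<in> conj_class n p) \<in> conj_class n p"
    using self_conj_class[OF assms(1)] by (rule someI[of "\<lambda>x. x \<in> conj_class n p"])
  hence "ncyc (SOME x. x \<in> conj_class n p) {..<n} l = ncyc p {..<n} l"
    using conj_class_iff[OF assms(1)] by blast
  moreover have "ncyc q {..<n} l = ncyc p {..<n} l" using assms(2) conj_class_iff[OF assms(1)] by blast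
  ultimately show ?thesis unfolding class_cycles_def num_cycles_ncyc by simp
qed

section \<open>Combination of two permutations\<close>

definition comb :: "nat \<Rightarrow> nat \<Rightarrow> (nat \<Rightarrow> nat) \<Rightarrow> (nat \<Rightarrow> nat) \<Rightarrow> nat \<Rightarrow> nat" where
  "comb k n p1 p2 x = (if x < k then p1 x else if x < n then p2 (x - k) + k else x)"

lemma ncyc_Un:
  assumes "A \<inter> B = {}" "q ` A \<subseteq> A" "q ` B \<subseteq> B" "finite A" "finite B"
  shows "ncyc q (A \<union> B) l = ncyc q A l + ncyc q B l"
proof -
  have o: "Orbs q (A \<union> B) = Orbs q A \<union> Orbs q B" by (simp add: Orbs_def image_Un)
  have e: "{Y \<in> Orbs q (A \<union> B). card Y = l} = {Y \<in> Orbs q A. card Y = l} \<union> {Y \<in> Orbs q B. card Y = l}"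
    unfolding o by blast
  have d: "Orbs q A \<inter> Orbs q B = {}"
  proof (rule ccontr)
    assume "Orbs q A \<inter> Orbs q B \<noteq> {}"
    then obtain x y where xy: "x \<in> A" "y \<in> B" "orbit q x = orbit q y" unfolding Orbs_def by blast
    have "orbit q x \<subseteq> A" by (rule orbit_subset_inv[OF assms(2) xy(1)])
    moreover have "orbit q x \<subseteq> B" unfolding xy(3) by (rule orbit_subset_inv[OF assms(3) xy(2)])
    ultimately show False using assms(1) orbit_nonempty[of q x] by blast
  qed
  have "card ({Y \<in> Orbs q A. card Y = l} \<union> {Y \<in> Orbs q B. card Y = l})
      = card {Y \<in> Orbs q A. card Y = l} + card {Y \<in> Orbs q B. card Y = l}"
    by (rule card_Un_disjoint) (use d assms(4,5) in \<open>auto simp: finite_Orbs\<close>)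
  thus ?thesis unfolding ncyc_def e .
qed

lemma comb_props:
  assumes "k \<le> n" "p1 permutes {..<k}" "p2 permutes {..<n - k}"
  shows "comb k n p1 p2 permutes {..<n}" "comb k n p1 p2 ` {..<k} = {..<k}"
    "ncyc (comb k n p1 p2) {..<n} l = ncyc p1 {..<k} l + ncyc p2 {..<n - k} l"
proof -
  let ?c = "comb k n p1 p2"
  have p1k: "p1 x < k" if "x < k" for x using permutes_in_image[OF assms(2)] that by simp
  have p2k: "p2 x < n - k" if "x < n - k" for x using permutes_in_image[OF assms(3)] that by simp
  have im1: "?c ` {..<k} \<subseteq> {..<k}" using p1k by (auto simp: comb_def)
  have im2: "?c ` {k..<n} \<subseteq> {k..<n}"
  proof
    fix y assume "y \<in> ?c ` {k..<n}" then obtain x where x: "k \<le> x" "x < n" "y = ?c x" by auto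
    have "p2 (x-k) < n - k" using p2k x by simp
    thus "y \<in> {k..<n}" using x by (simp add: comb_def)
  qed
  have imn: "?c ` {..<n} \<subseteq> {..<n}"
  proof
    fix y assume "y \<in> ?c ` {..<n}" then obtain x where x: "x < n" "y = ?c x" by auto
    show "y \<in> {..<n}"
    proof (cases "x < k")
      case True thus ?thesis using p1k[OF True] x assms(1) by (simp add: comb_def)
    next
      case False
      have "p2 (x-k) < n - k" using p2k x False by simp
      thus ?thesis using x False by (simp add: comb_def)
    qed
  qed
  have inj: "inj_on ?c {..<n}"
  proof (rule inj_onI)
    fix x y assume xy: "x \<in> {..<n}" "y \<in> {..<n}" "?c x = ?c y"
    show "x = y"
    proof (cases "x < k"; cases "y < k")
      assume "x < k" "y < k" thus ?thesis using xy permutes_inj[OF assms(2)] by (simp add: comb_def inj_eq)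
    next
      assume "x < k" "\<not> y < k" thus ?thesis using xy p1k[of x] by (simp add: comb_def)
    next
      assume "\<not> x < k" "y < k" thus ?thesis using xy p1k[of y] by (simp add: comb_def)
    next
      assume "\<not> x < k" "\<not> y < k"
      hence "p2 (x - k) = p2 (y - k)" using xy by (simp add: comb_def)
      hence "x - k = y - k" using permutes_inj[OF assms(3)] by (simp add: inj_eq)
      thus ?thesis using \<open>\<not> x < k\<close> \<open>\<not> y < k\<close> by simp
    qed
  qed
  have "?c ` {..<n} = {..<n}" by (rule endo_inj_surj[OF _ imn inj]) simp
  hence "bij_betw ?c {..<n} {..<n}" using inj by (simp add: bij_betw_def)
  thus "?c permutes {..<n}" by (rule bij_imp_permutes) (use assms(1) in \<open>simp add: comb_def\<close>)
  show "?c ` {..<k} = {..<k}"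
  proof -
    have "?c ` {..<k} = p1 ` {..<k}" by (intro image_cong) (auto simp: comb_def)
    thus ?thesis using permutes_image[OF assms(2)] by simp
  qed
  have u: "{..<n} = {..<k} \<union> {k..<n}" using assms(1) by auto
  have "ncyc ?c {..<n} l = ncyc ?c {..<k} l + ncyc ?c {k..<n} l"
    unfolding u by (rule ncyc_Un[OF _ im1 im2]) auto
  moreover have "ncyc p1 {..<k} l = ncyc ?c {..<k} l"
    by (rule ncyc_conj[of id]) (use p1k in \<open>auto simp: comb_def\<close>)
  moreover have "ncyc p2 {..<n - k} l = ncyc ?c {k..<n} l"
  proof (rule ncyc_conj[of "\<lambda>x. x + k"])
    show "bij_betw (\<lambda>x. x + k) {..<n - k} {k..<n}"
      unfolding bij_betw_def
    proof
      show "inj_on (\<lambda>x. x + k) {..<n - k}" by (rule inj_onI) simp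
      show "(\<lambda>x. x + k) ` {..<n - k} = {k..<n}"
      proof
        show "(\<lambda>x. x + k) ` {..<n - k} \<subseteq> {k..<n}" by auto
        show "{k..<n} \<subseteq> (\<lambda>x. x + k) ` {..<n - k}"
        proof
          fix y assume "y \<in> {k..<n}" 
          hence "y = (y - k) + k" "y - k \<in> {..<n - k}" by auto
          thus "y \<in> (\<lambda>x. x + k) ` {..<n - k}" by blast
        qed
      qed
    qed
    show "p2 ` {..<n - k} \<subseteq> {..<n - k}" using p2k by auto
    show "\<forall>x\<in>{..<n - k}. p2 x + k = ?c (x + k)" by (auto simp: comb_def)
  qed
  ultimately show "ncyc ?c {..<n} l = ncyc p1 {..<k} l + ncyc p2 {..<n - k} l" by simp
qed

section \<open>Double counting\<close>

definition Inv :: "nat \<Rightarrow> nat \<Rightarrow> (nat \<Rightarrow> nat) \<Rightarrow> nat set set" where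
  "Inv n k p = {S. S \<subseteq> {..<n} \<and> card S = k \<and> p ` S = S}"

lemma finite_conj_class: "finite (conj_class n p)"
  unfolding conj_class_def by (intro finite_imageI finite_permutations) simp

lemma stab_mono:
  assumes "p0 permutes {..<n}" "u permutes {..<n}" "A \<subseteq> {..<n}" "u ` A = B"
  shows "card {p \<in> conj_class n p0. p ` A = A} \<le> card {p \<in> conj_class n p0. p ` B = B}"
proof (rule card_inj_on_le)
  let ?h = "\<lambda>p. u \<circ> p \<circ> inv u"
  show "inj_on ?h {p \<in> conj_class n p0. p ` A = A}"
  proof (rule inj_onI)
    fix p q assume "?h p = ?h q"
    hence "inv u \<circ> ?h p \<circ> u = inv u \<circ> ?h q \<circ> u" by simp
    thus "p = q" using permutes_inverses[OF assms(2)] by (simp add: fun_eq_iff)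
  qed
  show "?h ` {p \<in> conj_class n p0. p ` A = A} \<subseteq> {p \<in> conj_class n p0. p ` B = B}"
  proof
    fix q assume "q \<in> ?h ` {p \<in> conj_class n p0. p ` A = A}"
    then obtain p where p: "p \<in> conj_class n p0" "p ` A = A" "q = ?h p" by blast
    have pp: "p permutes {..<n}" "\<forall>l. ncyc p {..<n} l = ncyc p0 {..<n} l"
      using p(1) conj_class_iff[OF assms(1)] by blast+
    have qC: "q \<in> conj_class n p0" unfolding conj_class_iff[OF assms(1)] p(3)
      using conj_perm[OF pp(1) assms(2)] ncyc_conj_perm[OF pp(1) assms(2)] pp(2) by simp
    have iB: "inv u ` B = A"
      using assms(4) permutes_inverses(2)[OF assms(2)] by (auto simp: image_comp image_iff)
    have "?h p ` B = u ` (p ` (inv u ` B))" by (simp add: image_comp)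
    hence "q ` B = B" unfolding p(3) using iB p(2) assms(4) by simp
    thus "q \<in> {p \<in> conj_class n p0. p ` B = B}" using qC by blast
  qed
  show "finite {p \<in> conj_class n p0. p ` B = B}" using finite_conj_class by simp
qed

lemma exists_perm_image:
  assumes "S \<subseteq> {..<n}" "card S = k"
  shows "\<exists>t. t permutes {..<n} \<and> t ` {..<k} = S"
proof -
  have kn: "k \<le> n" using assms card_mono[OF _ assms(1)] by fastforce
  obtain h1 where h1: "bij_betw h1 {..<k} S"
    using finite_same_card_bij[of "{..<k}" S] assms finite_subset[OF assms(1)] by auto
  have "card ({..<n} - S) = card ({..<n} - {..<k})"
    using assms kn by (simp add: card_Diff_subset finite_subset)
  then obtain h2 where h2: "bij_betw h2 ({..<n} - {..<k}) ({..<n} - S)"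
    using finite_same_card_bij[of "{..<n} - {..<k}" "{..<n} - S"] by auto
  define t where "t x = (if x < k then h1 x else if x < n then h2 x else x)" for x
  have b1: "bij_betw t {..<k} S"
    using h1 bij_betw_cong[of "{..<k}" h1 t S] by (simp add: t_def)
  have b2: "bij_betw t ({..<n} - {..<k}) ({..<n} - S)"
    using h2 bij_betw_cong[of "{..<n} - {..<k}" h2 t "{..<n} - S"] by (simp add: t_def)
  have "bij_betw t ({..<k} \<union> ({..<n} - {..<k})) (S \<union> ({..<n} - S))"
    by (rule bij_betw_combine[OF b1 b2]) auto
  moreover have "{..<k} \<union> ({..<n} - {..<k}) = {..<n}" "S \<union> ({..<n} - S) = {..<n}"
    using kn assms(1) by auto
  ultimately have "bij_betw t {..<n} {..<n}" by simp
  hence "t permutes {..<n}" by (rule bij_imp_permutes) (use kn in \<open>simp add: t_def\<close>)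
  moreover have "t ` {..<k} = S" using b1 by (simp add: bij_betw_def)
  ultimately show ?thesis by blast
qed

lemma card_filter_sum: "finite A \<Longrightarrow> card {x \<in> A. P x} = (\<Sum>x\<in>A. if P x then 1 else 0)"
  using sum.inter_filter[of A "\<lambda>_. 1::nat" P] by simp

lemma stab_count:
  assumes "p0 permutes {..<n}" "k \<le> n"
  shows "card {p \<in> conj_class n p0. p ` {..<k} = {..<k}} * (n choose k)
       = (\<Sum>p\<in>conj_class n p0. card (Inv n k p))"
proof -
  let ?C = "conj_class n p0" let ?K = "{S. S \<subseteq> {..<n} \<and> card S = k}"
  let ?St = "{p \<in> ?C. p ` {..<k} = {..<k}}"
  have fK: "finite ?K" by (rule finite_subset[of _ "Pow {..<n}"]) auto
  have cK: "card ?K = n choose k" using n_subsets[of "{..<n}" k] by simp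
  have eq: "card {p \<in> ?C. p ` S = S} = card ?St" if "S \<in> ?K" for S
  proof -
    have S: "S \<subseteq> {..<n}" "card S = k" using that by auto
    obtain t where t: "t permutes {..<n}" "t ` {..<k} = S" using exists_perm_image[OF S] by blast
    have "inv t ` S = {..<k}" unfolding t(2)[symmetric] image_comp permutes_inv_o(2)[OF t(1)] by simp
    have "card ?St \<le> card {p \<in> ?C. p ` S = S}"
      by (rule stab_mono[OF assms(1) t(1) _ t(2)]) (use assms(2) in auto)
    moreover have "card {p \<in> ?C. p ` S = S} \<le> card ?St"
      by (rule stab_mono[OF assms(1) permutes_inv[OF t(1)] _ \<open>inv t ` S = {..<k}\<close>]) (rule S(1))
    ultimately show ?thesis by simp
  qed
  have "(\<Sum>S\<in>?K. card {p \<in> ?C. p ` S = S}) = (\<Sum>S\<in>?K. card ?St)"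
    by (rule sum.cong[OF refl eq])
  hence "card ?St * (n choose k) = (\<Sum>S\<in>?K. card {p \<in> ?C. p ` S = S})"
    using cK by simp
  also have "\<dots> = (\<Sum>S\<in>?K. \<Sum>p\<in>?C. if p ` S = S then 1 else 0)"
    using finite_conj_class by (simp add: card_filter_sum)
  also have "\<dots> = (\<Sum>p\<in>?C. \<Sum>S\<in>?K. if p ` S = S then 1 else 0)" by (rule sum.swap)
  also have "\<dots> = (\<Sum>p\<in>?C. card {S \<in> ?K. p ` S = S})"
    by (intro sum.cong refl) (rule card_filter_sum[OF fK, symmetric])
  also have "\<dots> = (\<Sum>p\<in>?C. card (Inv n k p))" unfolding Inv_def
    by (intro sum.cong refl arg_cong[where f=card]) auto
  finally show ?thesis .
qed

lemma ncyc_out: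
  assumes "q permutes {..<n}" "\<not> (1 \<le> l \<and> l \<le> n)"
  shows "ncyc q {..<n} l = 0"
proof -
  have "card Y \<noteq> l" if Yin: "Y \<in> Orbs q {..<n}" for Y
  proof -
    obtain x where x: "x < n" "Y = orbit q x" using Yin unfolding Orbs_def by blast
    have sub: "Y \<subseteq> {..<n}" using x permutes_orbit_subset[OF assms(1)] by simp
    hence "card Y \<le> n" using card_mono[OF _ sub] by simp
    moreover have "card Y \<ge> 1" using x orbit_nonempty[of q x] finite_subset[OF sub]
      by (simp add: Suc_le_eq card_gt_0_iff)
    ultimately show ?thesis using assms(2) by auto
  qed
  hence e: "{Y \<in> Orbs q {..<n}. card Y = l} = {}" by blast
  show ?thesis unfolding ncyc_def e by simp
qed

lemma finite_conj_classes: "finite (conj_classes m)"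
  unfolding conj_classes_def by (intro finite_imageI finite_permutations) simp

lemma conj_classesE:
  assumes "C1 \<in> conj_classes k" "p1 \<in> C1"
  shows "p1 permutes {..<k}" "C1 = conj_class k p1"
proof -
  obtain q where q: "q permutes {..<k}" "C1 = conj_class k q"
    using assms(1) unfolding conj_classes_def by auto
  show "p1 permutes {..<k}" using assms(2) q conj_class_iff[OF q(1)] by blast
  show "C1 = conj_class k p1" using conj_class_eq[OF q(1)] assms(2) q(2) by simp
qed

lemma class_cycles_mem:
  assumes "C1 \<in> conj_classes k" "p1 \<in> C1"
  shows "class_cycles k C1 l = ncyc p1 {..<k} l"
proof -
  have pp: "p1 permutes {..<k}" "C1 = conj_class k p1" using conj_classesE[OF assms] by auto
  show ?thesis unfolding pp(2) by (rule class_cycles_eq[OF pp(1) self_conj_class[OF pp(1)]])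
qed

lemma finite_class_mem: "C1 \<in> conj_classes k \<Longrightarrow> finite C1"
  unfolding conj_classes_def using finite_conj_class by auto

lemma pairs_le:
  assumes "p0 permutes {..<n}" "k \<le> n"
  shows "(\<Sum>(C1, C2) \<in> {(C1, C2). C1 \<in> conj_classes k \<and> C2 \<in> conj_classes (n - k) \<and> class_prod_eq n k (conj_class n p0) C1 C2}.
            card C1 * card C2) \<le> card {p \<in> conj_class n p0. p ` {..<k} = {..<k}}"
    (is "(\<Sum>(C1, C2) \<in> ?P. _) \<le> card ?St")
proof -
  let ?C = "conj_class n p0"
  let ?Sig = "SIGMA x:?P. fst x \<times> snd x"
  have p0C: "p0 \<in> ?C" by (rule self_conj_class[OF assms(1)])
  have elem: "p1 permutes {..<k} \<and> p2 permutes {..<n-k} \<and> C1 = conj_class k p1 \<and> C2 = conj_class (n-k) p2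
      \<and> comb k n p1 p2 \<in> ?St" if "(C1, C2) \<in> ?P" "p1 \<in> C1" "p2 \<in> C2" for C1 C2 p1 p2
  proof -
    have c1: "C1 \<in> conj_classes k" and c2: "C2 \<in> conj_classes (n - k)"
      and pe: "class_prod_eq n k ?C C1 C2" using that(1) by auto
    have pp1: "p1 permutes {..<k}" "C1 = conj_class k p1" using conj_classesE[OF c1 that(2)] by auto
    have pp2: "p2 permutes {..<n-k}" "C2 = conj_class (n-k) p2" using conj_classesE[OF c2 that(3)] by auto
    note cp = comb_props[OF assms(2) pp1(1) pp2(1)]
    have "ncyc (comb k n p1 p2) {..<n} l = ncyc p0 {..<n} l" for l
    proof (cases "1 \<le> l \<and> l \<le> n")
      case True
      hence "class_cycles n ?C l = class_cycles k C1 l + class_cycles (n - k) C2 l"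
        using pe unfolding class_prod_eq_def by auto
      thus ?thesis using cp(3) class_cycles_eq[OF assms(1) p0C] class_cycles_mem[OF c1 that(2)]
          class_cycles_mem[OF c2 that(3)] by simp
    next
      case False
      thus ?thesis using ncyc_out[OF cp(1) False] ncyc_out[OF assms(1) False] by simp
    qed
    hence "comb k n p1 p2 \<in> ?C" using conj_class_iff[OF assms(1)] cp(1) by blast
    thus ?thesis using pp1 pp2 cp(2) by blast
  qed
  have fP: "finite ?P"
    by (rule finite_subset[of _ "conj_classes k \<times> conj_classes (n - k)"]) (auto simp: finite_conj_classes)
  have "(\<Sum>(C1, C2) \<in> ?P. card C1 * card C2) = (\<Sum>x\<in>?P. card (fst x \<times> snd x))"
    by (intro sum.cong refl) (auto simp: card_cartesian_product)
  also have "\<dots> = card ?Sig"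
    by (rule card_SigmaI[symmetric, OF fP]) (auto simp: finite_class_mem)
  also have "\<dots> \<le> card ?St"
  proof (rule card_inj_on_le)
    let ?g = "\<lambda>z. comb k n (fst (snd z)) (snd (snd z))"
    show "?g ` ?Sig \<subseteq> ?St" using elem by fastforce
    show "finite ?St" using finite_conj_class by simp
    show "inj_on ?g ?Sig"
    proof (rule inj_onI)
      fix z w assume z: "z \<in> ?Sig" and w: "w \<in> ?Sig" and eq: "?g z = ?g w"
      obtain C1 C2 p1 p2 where zz: "z = ((C1, C2), (p1, p2))" "(C1, C2) \<in> ?P" "p1 \<in> C1" "p2 \<in> C2"
        using z by auto
      obtain D1 D2 q1 q2 where ww: "w = ((D1, D2), (q1, q2))" "(D1, D2) \<in> ?P" "q1 \<in> D1" "q2 \<in> D2"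
        using w by auto
      note e1 = elem[OF zz(2-4)] and e2 = elem[OF ww(2-4)]
      have ceq: "comb k n p1 p2 = comb k n q1 q2" using eq zz ww by simp
      have "p1 = q1"
      proof
        fix x show "p1 x = q1 x"
        proof (cases "x < k")
          case True thus ?thesis using fun_cong[OF ceq, of x] by (simp add: comb_def)
        next
          case False thus ?thesis using e1 e2 permutes_not_in[of p1 "{..<k}" x] permutes_not_in[of q1 "{..<k}" x] by simp
        qed
      qed
      moreover have "p2 = q2"
      proof
        fix x show "p2 x = q2 x"
        proof (cases "x < n - k")
          case True
          hence "x + k < n" "\<not> x + k < k" using assms(2) by auto
          thus ?thesis using fun_cong[OF ceq, of "x + k"] by (simp add: comb_def)
        next
          case False thus ?thesis using e1 e2 permutes_not_in[of p2 "{..<n-k}" x] permutes_not_in[of q2 "{..<n-k}" x] by simp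
        qed
      qed
      ultimately show "z = w" using zz(1) ww(1) e1 e2 by simp
    qed
  qed
  finally show ?thesis .
qed

lemma main_bound:
  assumes "C \<in> conj_classes n" "k \<le> n" "\<forall>p\<in>C. real (card (Inv n k p)) \<le> B"
  shows "(\<Sum>(C1, C2) \<in> {(C1, C2). C1 \<in> conj_classes k \<and> C2 \<in> conj_classes (n - k) \<and> class_prod_eq n k C C1 C2}.
            real (card C1) * real (card C2)) * real (n choose k) \<le> real (card C) * B"
proof -
  obtain p0 where p0: "p0 permutes {..<n}" "C = conj_class n p0" using assms(1) unfolding conj_classes_def by auto
  let ?P = "{(C1, C2). C1 \<in> conj_classes k \<and> C2 \<in> conj_classes (n - k) \<and> class_prod_eq n k C C1 C2}"
  have "(\<Sum>(C1, C2) \<in> ?P. real (card C1) * real (card C2)) = real (\<Sum>(C1, C2) \<in> ?P. card C1 * card C2)"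
    by (simp add: of_nat_sum case_prod_beta)
  also have "\<dots> \<le> real (card {p \<in> C. p ` {..<k} = {..<k}})"
    using pairs_le[OF p0(1) assms(2)] unfolding p0(2) of_nat_le_iff .
  finally have "(\<Sum>(C1, C2) \<in> ?P. real (card C1) * real (card C2)) * real (n choose k)
     \<le> real (card {p \<in> C. p ` {..<k} = {..<k}}) * real (n choose k)"
    by (rule mult_right_mono) simp
  also have "\<dots> = real (\<Sum>p\<in>C. card (Inv n k p))"
    using stab_count[OF p0(1) assms(2)] p0(2) by (metis of_nat_mult)
  also have "\<dots> = (\<Sum>p\<in>C. real (card (Inv n k p)))" by (simp add: of_nat_sum)
  also have "\<dots> \<le> real (card C) * B" using assms(3) sum_bounded_above[of C "\<lambda>p. real (card (Inv n k p))" B] by simp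
  finally show ?thesis .
qed

section \<open>Bounds on invariant sets\<close>

lemma Inv_orbs:
  assumes "p permutes {..<n}"
  shows "card (Inv n k p) \<le> 2 ^ card (Orbs p {..<n})"
proof -
  let ?phi = "\<lambda>S. {Y \<in> Orbs p {..<n}. Y \<subseteq> S}"
  have U: "S = \<Union>(?phi S)" if "S \<in> Inv n k p" for S
  proof
    show "\<Union>(?phi S) \<subseteq> S" by blast
    show "S \<subseteq> \<Union>(?phi S)"
    proof
      fix x assume x: "x \<in> S"
      have S: "S \<subseteq> {..<n}" "p ` S = S" using that unfolding Inv_def by auto
      have "orbit p x \<subseteq> S" using orbit_subset_inv[of p S x] S(2) x by simp
      moreover have "orbit p x \<in> Orbs p {..<n}" using S(1) x unfolding Orbs_def by auto
      moreover have "x \<in> orbit p x" using perm_self_in_orbit[OF assms finite_lessThan[of n]] by simp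
      ultimately show "x \<in> \<Union>(?phi S)" by blast
    qed
  qed
  have "card (Inv n k p) \<le> card (Pow (Orbs p {..<n}))"
  proof (rule card_inj_on_le)
    show "inj_on ?phi (Inv n k p)" using U by (metis (no_types, lifting) inj_onI)
    show "?phi ` Inv n k p \<subseteq> Pow (Orbs p {..<n})" by auto
    show "finite (Pow (Orbs p {..<n}))" by (simp add: finite_Orbs)
  qed
  thus ?thesis by (simp add: card_Pow finite_Orbs)
qed

lemma orbs_card:
  assumes "p permutes {..<n}"
  shows "2 * card (Orbs p {..<n}) \<le> n + ncyc p {..<n} 1"
proof -
  let ?O = "Orbs p {..<n}"
  let ?F = "{Y \<in> ?O. card Y = 1}" let ?G = "{Y \<in> ?O. card Y \<noteq> 1}"
  have fO: "finite ?O" by (simp add: finite_Orbs)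
  have sub: "Y \<subseteq> {..<n}" if "Y \<in> ?O" for Y
    using that permutes_orbit_subset[OF assms] unfolding Orbs_def by auto
  have fin: "finite Y" if "Y \<in> ?O" for Y using sub[OF that] finite_subset by blast
  have ne: "Y \<noteq> {}" if "Y \<in> ?O" for Y using that unfolding Orbs_def by (metis imageE orbit_nonempty)
  have UO: "\<Union>?O = {..<n}"
  proof
    show "\<Union>?O \<subseteq> {..<n}" using sub by blast
    show "{..<n} \<subseteq> \<Union>?O" unfolding Orbs_def using perm_self_in_orbit[OF assms finite_lessThan[of n]] by blast
  qed
  have disj: "disjoint ?O"
  proof (rule pairwiseI)
    fix Y Z assume YZ: "Y \<in> ?O" "Z \<in> ?O" "Y \<noteq> Z"
    show "disjnt Y Z"
    proof (rule ccontr)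
      assume "\<not> disjnt Y Z"
      then obtain z where z: "z \<in> Y" "z \<in> Z" unfolding disjnt_def by blast
      obtain x y where xy: "Y = orbit p x" "Z = orbit p y" using YZ unfolding Orbs_def by blast
      have "orbit p z = Y" using orbit_eq_of_in[OF assms finite_lessThan[of n], of z x] z(1) xy(1) by simp
      moreover have "orbit p z = Z" using orbit_eq_of_in[OF assms finite_lessThan[of n], of z y] z(2) xy(2) by simp
      ultimately show False using YZ(3) by simp
    qed
  qed
  have "n = card (\<Union>?O)" using UO by simp
  also have "\<dots> = sum card ?O" by (rule card_Union_disjoint[OF disj fin])
  also have "\<dots> = sum card ?F + sum card ?G"
    using fO by (subst sum.union_disjoint[symmetric]) (auto intro!: sum.cong)
  also have "sum card ?F = card ?F" by simp
  finally have n: "n = card ?F + sum card ?G" .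
  have "sum (\<lambda>_. 2) ?G \<le> sum card ?G"
  proof (rule sum_mono)
    fix Y assume "Y \<in> ?G"
    hence "card Y \<noteq> 1" "card Y \<noteq> 0" using fin ne by auto
    thus "2 \<le> card Y" by simp
  qed
  hence "2 * card ?G \<le> sum card ?G" by simp
  moreover have "card ?O = card ?F + card ?G"
    using fO by (subst card_Un_disjoint[symmetric]) (auto intro!: arg_cong[where f=card])
  ultimately show ?thesis using n unfolding ncyc_def by linarith
qed

lemma perm_compl_inv:
  assumes "p permutes A" "S \<subseteq> A" "p ` S = S"
  shows "p ` (A - S) = A - S"
  using image_set_diff[OF permutes_inj[OF assms(1)], of A S] permutes_image[OF assms(1)] assms(3) by simp

lemma fix_card:
  fixes n :: nat
  assumes "p permutes {..<n}"
  shows "card {x. x < n \<and> p x = x} = ncyc p {..<n} 1"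
proof -
  have "{Y \<in> Orbs p {..<n}. card Y = 1} = (\<lambda>x. {x}) ` {x. x < n \<and> p x = x}"
  proof
    show "{Y \<in> Orbs p {..<n}. card Y = 1} \<subseteq> (\<lambda>x. {x}) ` {x. x < n \<and> p x = x}"
    proof
      fix Y assume "Y \<in> {Y \<in> Orbs p {..<n}. card Y = 1}"
      then obtain x where x: "x < n" "Y = orbit p x" "card Y = 1" unfolding Orbs_def by auto
      have "x \<in> Y" using x perm_self_in_orbit[OF assms finite_lessThan[of n]] by simp
      hence "Y = {x}" using x(3) by (metis card_1_singletonE singletonD)
      hence "p x = x" using x(2) orbit_eq_singleton_iff by metis
      thus "Y \<in> (\<lambda>x. {x}) ` {x. x < n \<and> p x = x}" using \<open>Y = {x}\<close> x(1) by blast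
    qed
    show "(\<lambda>x. {x}) ` {x. x < n \<and> p x = x} \<subseteq> {Y \<in> Orbs p {..<n}. card Y = 1}"
    proof
      fix Y assume "Y \<in> (\<lambda>x. {x}) ` {x. x < n \<and> p x = x}"
      then obtain x where x: "x < n" "p x = x" "Y = {x}" by auto
      hence "orbit p x = Y" using orbit_eq_singleton_iff by metis
      thus "Y \<in> {Y \<in> Orbs p {..<n}. card Y = 1}" using x unfolding Orbs_def by auto
    qed
  qed
  thus ?thesis unfolding ncyc_def by (simp add: card_image)
qed

lemma Inv_n1:
  assumes "p permutes {..<n}" "1 \<le> n"
  shows "card (Inv n (n - 1) p) \<le> ncyc p {..<n} 1"
proof -
  have "Inv n (n - 1) p \<subseteq> (\<lambda>x. {..<n} - {x}) ` {x. x < n \<and> p x = x}"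
  proof
    fix S assume "S \<in> Inv n (n - 1) p"
    hence S: "S \<subseteq> {..<n}" "card S = n - 1" "p ` S = S" unfolding Inv_def by auto
    have "card ({..<n} - S) = 1" using S assms(2) by (simp add: card_Diff_subset finite_subset)
    then obtain x where x: "{..<n} - S = {x}" by (rule card_1_singletonE)
    have "p ` {x} = {x}" using perm_compl_inv[OF assms(1) S(1,3)] x by simp
    hence "p x = x" by simp
    moreover have "x < n" using x by auto
    moreover have "S = {..<n} - {x}" using x S(1) by auto
    ultimately show "S \<in> (\<lambda>x. {..<n} - {x}) ` {x. x < n \<and> p x = x}" by blast
  qed
  hence "card (Inv n (n - 1) p) \<le> card ((\<lambda>x. {..<n} - {x}) ` {x. x < n \<and> p x = x})"
    by (intro card_mono) auto
  also have "\<dots> \<le> card {x. x < n \<and> p x = x}" by (rule card_image_le) simp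
  finally show ?thesis using fix_card[OF assms(1)] by simp
qed

lemma Inv_n2:
  assumes "p permutes {..<n}" "2 \<le> n"
  shows "card (Inv n (n - 2) p) \<le> (ncyc p {..<n} 1 choose 2) + n"
proof -
  let ?Fx = "{x. x < n \<and> p x = x}"
  let ?T = "{T. T \<subseteq> ?Fx \<and> card T = 2} \<union> (\<lambda>x. {x, p x}) ` {..<n}"
  have "Inv n (n - 2) p \<subseteq> (\<lambda>T. {..<n} - T) ` ?T"
  proof
    fix S assume "S \<in> Inv n (n - 2) p"
    hence S: "S \<subseteq> {..<n}" "card S = n - 2" "p ` S = S" unfolding Inv_def by auto
    have "card ({..<n} - S) = 2" using S assms(2) by (simp add: card_Diff_subset finite_subset)
    then obtain x y where xy: "{..<n} - S = {x, y}" "x \<noteq> y" by (auto simp: card_2_iff)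
    have pT: "p ` {x, y} = {x, y}" using perm_compl_inv[OF assms(1) S(1,3)] xy by simp
    have xn: "x < n" "y < n" using xy by auto
    have "{x, y} \<in> ?T"
    proof (cases "p x = x")
      case True
      have "p y \<in> {x, y}" using pT by blast
      moreover have "p y \<noteq> x" using True xy(2) permutes_inj[OF assms(1)] by (metis injD)
      ultimately have "p y = y" by blast
      thus ?thesis using True xn xy(2) by auto
    next
      case False
      have "p x \<in> {x, y}" using pT by blast
      hence "p x = y" using False by blast
      thus ?thesis using xn by blast
    qed
    moreover have "S = {..<n} - {x, y}" using xy S(1) by auto
    ultimately show "S \<in> (\<lambda>T. {..<n} - T) ` ?T" by blast
  qed
  hence "card (Inv n (n - 2) p) \<le> card ((\<lambda>T. {..<n} - T) ` ?T)"
    by (intro card_mono) (auto intro!: finite_imageI finite_subset[of _ "Pow {..<n}"])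
  also have "\<dots> \<le> card ?T" by (rule card_image_le) (auto intro!: finite_subset[of _ "Pow {..<n}"])
  also have "\<dots> \<le> card {T. T \<subseteq> ?Fx \<and> card T = 2} + card ((\<lambda>x. {x, p x}) ` {..<n})" by (rule card_Un_le)
  also have "card {T. T \<subseteq> ?Fx \<and> card T = 2} = card ?Fx choose 2" by (rule n_subsets) simp
  also have "card ((\<lambda>x. {x, p x}) ` {..<n}) \<le> n" using card_image_le[of "{..<n}" "\<lambda>x. {x, p x}"] by simp
  finally show ?thesis using fix_card[OF assms(1)] by simp
qed

lemma ln2_half: "ln (2::real) \<ge> 1/2"
proof -
  have "exp (1::real) \<le> 2^2" using exp_le by simp
  hence "1 \<le> ln ((2::real)^2)" by (metis exp_gt_zero ln_exp ln_le_cancel_iff zero_less_power zero_less_numeral)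
  moreover have "ln ((2::real)^2) = 2 * ln 2" using ln_realpow[of 2 2] by simp
  ultimately show ?thesis by linarith
qed

lemma analytic:
  "\<exists>N::nat. \<forall>n\<ge>N. (real n + 1) * 2 powr (5/8 * real n) \<le> exp (- (3/50) * real n) * 2 powr (3/4 * real n)"
proof -
  have "\<forall>\<^sub>F n in at_top. (real n + 1) \<le> exp (real n / 400)" by real_asymp
  then obtain N where N: "\<And>n. n \<ge> N \<Longrightarrow> real n + 1 \<le> exp (real n / 400)"
    unfolding eventually_at_top_linorder by blast
  show ?thesis
  proof (intro exI allI impI)
    fix n assume "n \<ge> N"
    hence h: "real n + 1 \<le> exp (real n / 400)" by (rule N)
    let ?L = "ln (2::real)"
    have L: "?L \<ge> 1/2" by (rule ln2_half)
    have e1: "2 powr (5/8 * real n) = exp (5/8 * real n * ?L)" by (simp add: powr_def)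
    have e2: "2 powr (3/4 * real n) = exp (3/4 * real n * ?L)" by (simp add: powr_def)
    have "real n * ?L \<ge> real n * (1/2)" using L by (intro mult_left_mono) auto
    hence "real n / 400 \<le> - (3/50) * real n + real n * ?L / 8" by linarith
    hence "exp (real n / 400) \<le> exp (- (3/50) * real n + real n * ?L / 8)" by simp
    hence "(real n + 1) \<le> exp (- (3/50) * real n + real n * ?L / 8)" using h by linarith
    hence "(real n + 1) * exp (5/8 * real n * ?L) \<le> exp (- (3/50) * real n + real n * ?L / 8) * exp (5/8 * real n * ?L)"
      by (rule mult_right_mono) simp
    also have "\<dots> = exp (- (3/50) * real n) * exp (3/4 * real n * ?L)"
      by (simp add: exp_add[symmetric] algebra_simps)
    finally show "(real n + 1) * 2 powr (5/8 * real n) \<le> exp (- (3/50) * real n) * 2 powr (3/4 * real n)"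
      using e1 e2 by simp
  qed
qed

lemma fixpts_mem:
  assumes "C \<in> conj_classes n" "p \<in> C"
  shows "ncyc p {..<n} 1 = fixpts n C"
  using class_cycles_mem[OF assms] unfolding fixpts_def by simp

lemma sum_le_prod:
  assumes "\<forall>x\<in>P. snd x \<in> conj_classes m"
  shows "(\<Sum>(C1, C2) \<in> P. real (card C1)) \<le> (\<Sum>(C1, C2) \<in> P. real (card C1) * real (card C2))"
proof (rule sum_mono)
  fix x assume "x \<in> P"
  then obtain C1 C2 where x: "x = (C1, C2)" "C2 \<in> conj_classes m" using assms by (cases x) auto
  obtain q where q: "q permutes {..<m}" "C2 = conj_class m q" using x(2) unfolding conj_classes_def by auto
  have "card C2 \<ge> 1" using q self_conj_class[OF q(1)] finite_conj_class[of m q]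
    by (metis One_nat_def Suc_leI card_gt_0_iff empty_iff)
  thus "(case x of (C1, C2) \<Rightarrow> real (card C1)) \<le> (case x of (C1, C2) \<Rightarrow> real (card C1) * real (card C2))"
    using x(1) by (simp add: mult_le_cancel_left1)
qed

theorem lemma5p6:
  fixes \<delta> :: real
  assumes "0 < \<delta>" and "\<delta> \<le> 1/4"
  shows "\<exists>N::nat. \<forall>n\<ge>N. \<forall>C\<in>conj_classes n. real (fixpts n C) \<le> \<delta> * real n \<longrightarrow>
     (\<forall>k::nat. real n / 2 < real k \<and> real k \<le> 5/8 * real n \<longrightarrow>
        (\<Sum>(C1, C2) \<in> {(C1, C2). C1 \<in> conj_classes k \<and> C2 \<in> conj_classes (n - k) \<and> class_prod_eq n k C C1 C2}.
            real (card C1) * real (card C2)) \<le> exp (- (3/50) * real n) * real (card C))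
   \<and> (\<Sum>(C1, C2) \<in> {(C1, C2). C1 \<in> conj_classes (n - 1) \<and> C2 \<in> conj_classes 1 \<and> class_prod_eq n (n - 1) C C1 C2}.
            real (card C1)) \<le> \<delta> * real (card C)
   \<and> (\<Sum>(C1, C2) \<in> {(C1, C2). C1 \<in> conj_classes (n - 2) \<and> C2 \<in> conj_classes 2 \<and> class_prod_eq n (n - 2) C C1 C2}.
            real (card C1)) \<le> 2 * \<delta>^2 * real (card C)"
proof -
  obtain N0 where N0: "\<And>n. n \<ge> N0 \<Longrightarrow> (real n + 1) * 2 powr (5/8 * real n) \<le> exp (- (3/50) * real n) * 2 powr (3/4 * real n)"
    using analytic by blast
  define N where "N = max N0 (nat \<lceil>2 / \<delta>^2\<rceil> + 2)"
  show ?thesis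
  proof (intro exI[of _ N] allI impI ballI conjI)
    fix n C assume nN: "n \<ge> N" and C: "C \<in> conj_classes n" and fC: "real (fixpts n C) \<le> \<delta> * real n"
    have n0: "n \<ge> N0" using nN by (simp add: N_def)
    have n2: "real n \<ge> 2 / \<delta>^2 + 2"
    proof -
      have a: "nat \<lceil>2 / \<delta>^2\<rceil> + 2 \<le> n" using nN unfolding N_def by linarith
      have "real (nat \<lceil>2 / \<delta>^2\<rceil> + 2) \<le> real n" using a by (simp only: of_nat_le_iff)
      hence "2 + real_of_int \<lceil>2 / \<delta>^2\<rceil> \<le> real n" by simp
      thus ?thesis using le_of_int_ceiling[of "2 / \<delta>^2"] by linarith
    qed
    have d2: "2 / \<delta>^2 > 0" using assms(1) by simp
    have ng2: "n \<ge> 2" using n2 d2 by linarith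
    obtain p0 where p0: "p0 permutes {..<n}" "C = conj_class n p0" using C unfolding conj_classes_def by auto
    have pC: "p permutes {..<n}" "ncyc p {..<n} 1 = fixpts n C" if "p \<in> C" for p
      using that conj_class_iff[OF p0(1)] p0(2) fixpts_mem[OF C that] by auto
    let ?f = "real (fixpts n C)"
    have f0: "?f \<ge> 0" by simp
    show "(\<Sum>(C1, C2) \<in> {(C1, C2). C1 \<in> conj_classes k \<and> C2 \<in> conj_classes (n - k) \<and> class_prod_eq n k C C1 C2}.
            real (card C1) * real (card C2)) \<le> exp (- (3/50) * real n) * real (card C)"
      if k: "real n / 2 < real k \<and> real k \<le> 5/8 * real n" for k
    proof -
      let ?X = "(\<Sum>(C1, C2) \<in> {(C1, C2). C1 \<in> conj_classes k \<and> C2 \<in> conj_classes (n - k) \<and> class_prod_eq n k C C1 C2}.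
            real (card C1) * real (card C2))"
      let ?B = "2 powr (5/8 * real n)"
      have kn: "k \<le> n" using k by linarith
      have Bnd: "real (card (Inv n k p)) \<le> ?B" if "p \<in> C" for p
      proof -
        have "real (card (Inv n k p)) \<le> real (2 ^ card (Orbs p {..<n}))"
          using Inv_orbs[OF pC(1)[OF that]] by (simp only: of_nat_le_iff)
        also have "\<dots> = 2 powr (real (card (Orbs p {..<n})))" by (simp add: powr_realpow)
        also have "\<dots> \<le> ?B"
        proof (rule powr_mono)
          have "2 * real (card (Orbs p {..<n})) \<le> real n + ?f"
            using orbs_card[OF pC(1)[OF that]] pC(2)[OF that] by (simp only: of_nat_le_iff[symmetric] of_nat_add of_nat_mult)
          moreover have "\<delta> * real n \<le> 1/4 * real n" using assms(2) by (intro mult_right_mono) auto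
          ultimately show "real (card (Orbs p {..<n})) \<le> 5/8 * real n" using fC by linarith
        qed simp
        finally show ?thesis .
      qed
      have main: "?X * real (n choose k) \<le> real (card C) * ?B"
        by (rule main_bound[OF C kn]) (use Bnd in blast)
      define j where "j = n - k"
      have j1: "real j \<ge> 3/8 * real n" using k kn by (simp add: j_def of_nat_diff)
      have j2: "2 * j \<le> n" using k kn unfolding j_def by linarith
      have jpos: "j > 0" using j1 ng2 by (cases "j = 0") auto
      have "real (n choose k) = real (n choose j)" using kn by (simp add: j_def binomial_symmetric[symmetric])
      also have "\<dots> \<ge> real ((2*j) choose j)" using binomial_right_mono[OF j2] by simp
      finally have b1: "real (n choose k) \<ge> real ((2*j) choose j)" .
      have b2: "4^j / (2 * real j) \<le> real ((2*j) choose j)" by (rule central_binomial_lower_bound[OF jpos])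
      have "(4::real)^j = 2^(2*j)" by (simp add: power_mult)
      also have "\<dots> = 2 powr (real (2*j))" by (rule powr_realpow[symmetric]) simp
      also have "\<dots> = 2 powr (2 * real j)" by simp
      also have "\<dots> \<ge> 2 powr (3/4 * real n)" using j1 by (intro powr_mono) auto
      finally have b3: "2 powr (3/4 * real n) \<le> 4^j" .
      have b4: "2 * real j \<le> real n + 1" using j2 by linarith
      let ?L = "2 powr (3/4 * real n) / (real n + 1)"
      have "?L \<le> 4^j / (2 * real j)"
        using b3 b4 jpos by (intro frac_le) auto
      hence bL: "?L \<le> real (n choose k)" using b1 b2 by linarith
      have Lpos: "?L > 0" by simp
      have BE: "?B \<le> exp (- (3/50) * real n) * ?L"
        using N0[OF n0] by (simp add: field_simps)
      have "?X * ?L \<le> ?X * real (n choose k)"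
        using bL by (rule mult_left_mono) (auto intro!: sum_nonneg)
      also have "\<dots> \<le> real (card C) * ?B" by (rule main)
      also have "\<dots> \<le> real (card C) * (exp (- (3/50) * real n) * ?L)" using BE by (rule mult_left_mono) simp
      finally have "?X * ?L \<le> (exp (- (3/50) * real n) * real (card C)) * ?L" by (simp add: ac_simps)
      thus ?thesis using mult_le_cancel_right_pos[OF Lpos] by blast
    qed
    show "(\<Sum>(C1, C2) \<in> {(C1, C2). C1 \<in> conj_classes (n - 1) \<and> C2 \<in> conj_classes 1 \<and> class_prod_eq n (n - 1) C C1 C2}.
            real (card C1)) \<le> \<delta> * real (card C)"
    proof -
      let ?P = "{(C1, C2). C1 \<in> conj_classes (n - 1) \<and> C2 \<in> conj_classes 1 \<and> class_prod_eq n (n - 1) C C1 C2}"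
      have m: "(\<Sum>(C1, C2) \<in> ?P. real (card C1) * real (card C2)) * real (n choose (n - 1)) \<le> real (card C) * ?f"
      proof -
        have "\<forall>p\<in>C. real (card (Inv n (n - 1) p)) \<le> ?f"
        proof
          fix p assume "p \<in> C"
          thus "real (card (Inv n (n - 1) p)) \<le> ?f" using Inv_n1[OF pC(1)] pC(2) ng2 by (simp only: of_nat_le_iff)
        qed
        from main_bound[OF C _ this] show ?thesis using ng2 by simp
      qed
      have "(\<Sum>(C1, C2) \<in> ?P. real (card C1)) \<le> (\<Sum>(C1, C2) \<in> ?P. real (card C1) * real (card C2))"
        by (rule sum_le_prod) auto
      moreover have "real (n choose (n - 1)) = real n" using ng2 by (simp add: binomial_symmetric[symmetric])
      ultimately have "(\<Sum>(C1, C2) \<in> ?P. real (card C1)) * real n \<le> real (card C) * ?f"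
        using m by (smt (verit) mult_right_mono of_nat_0_le_iff)
      also have "\<dots> \<le> real (card C) * (\<delta> * real n)" using fC by (rule mult_left_mono) simp
      finally have "(\<Sum>(C1, C2) \<in> ?P. real (card C1)) * real n \<le> (\<delta> * real (card C)) * real n" by (simp add: ac_simps)
      thus ?thesis using ng2 by simp
    qed
    show "(\<Sum>(C1, C2) \<in> {(C1, C2). C1 \<in> conj_classes (n - 2) \<and> C2 \<in> conj_classes 2 \<and> class_prod_eq n (n - 2) C C1 C2}.
            real (card C1)) \<le> 2 * \<delta>^2 * real (card C)"
    proof -
      let ?P = "{(C1, C2). C1 \<in> conj_classes (n - 2) \<and> C2 \<in> conj_classes 2 \<and> class_prod_eq n (n - 2) C C1 C2}"
      let ?B = "?f^2 / 2 + real n"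
      have Bnd: "real (card (Inv n (n - 2) p)) \<le> ?B" if "p \<in> C" for p
      proof -
        have "card (Inv n (n - 2) p) \<le> (fixpts n C choose 2) + n"
          using Inv_n2[OF pC(1)[OF that] ng2] pC(2)[OF that] by simp
        moreover have "2 * (fixpts n C choose 2) \<le> fixpts n C * fixpts n C"
          by (simp add: choose_two) (metis diff_le_self div_times_less_eq_dividend dual_order.trans mult.commute mult_le_mono2)
        ultimately have "2 * card (Inv n (n - 2) p) \<le> fixpts n C * fixpts n C + 2 * n" by linarith
        hence "real (2 * card (Inv n (n - 2) p)) \<le> real (fixpts n C * fixpts n C + 2 * n)"
          by (simp only: of_nat_le_iff)
        hence "2 * real (card (Inv n (n - 2) p)) \<le> ?f * ?f + 2 * real n" by simp
        thus ?thesis by (simp add: power2_eq_square)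
      qed
      have m: "(\<Sum>(C1, C2) \<in> ?P. real (card C1) * real (card C2)) * real (n choose (n - 2)) \<le> real (card C) * ?B"
        using main_bound[OF C, of "n - 2" ?B] Bnd ng2 by simp
      have "(\<Sum>(C1, C2) \<in> ?P. real (card C1)) \<le> (\<Sum>(C1, C2) \<in> ?P. real (card C1) * real (card C2))"
        by (rule sum_le_prod) auto
      moreover have "real (n choose (n - 2)) = real n * (real n - 1) / 2"
        using ng2 by (simp add: binomial_symmetric[symmetric] choose_two of_nat_diff real_of_nat_div)
      ultimately have A: "(\<Sum>(C1, C2) \<in> ?P. real (card C1)) * (real n * (real n - 1) / 2) \<le> real (card C) * ?B"
        using m by (smt (verit) divide_nonneg_nonneg mult_nonneg_nonneg mult_right_mono of_nat_0_le_iff)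
      have ff: "?f^2 \<le> \<delta>^2 * real n ^ 2" using fC f0 by (metis power_mono power_mult_distrib)
      have key: "?B \<le> 2 * \<delta>^2 * (real n * (real n - 1) / 2)"
      proof -
        have "2 / \<delta>^2 * \<delta>^2 = 2" using assms(1) by simp
        have "\<delta>^2 * real n \<ge> \<delta>^2 * (2 / \<delta>^2 + 2)" using n2 by (intro mult_left_mono) auto
        hence "\<delta>^2 * real n \<ge> 2 + 2 * \<delta>^2" using assms(1) by (simp add: algebra_simps)
        hence "\<delta>^2 * real n * real n \<ge> (2 + 2 * \<delta>^2) * real n" by (intro mult_right_mono) auto
        thus ?thesis using ff by (simp add: algebra_simps power2_eq_square)
      qed
      have pos: "real n * (real n - 1) / 2 > 0" using ng2 by simp
      have "(\<Sum>(C1, C2) \<in> ?P. real (card C1)) * (real n * (real n - 1) / 2)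
          \<le> real (card C) * (2 * \<delta>^2 * (real n * (real n - 1) / 2))"
        using A key by (smt (verit) mult_left_mono of_nat_0_le_iff)
      hence "(\<Sum>(C1, C2) \<in> ?P. real (card C1)) * (real n * (real n - 1) / 2)
          \<le> (2 * \<delta>^2 * real (card C)) * (real n * (real n - 1) / 2)" by (simp add: ac_simps)
      thus ?thesis using pos by (simp only: mult_le_cancel_right_pos)
    qed
  qed
qed

end
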